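(* In the setting of the context, consider a Case 1 spacetime ($\partial_v r_-=0$, so $x_-(v)\equiv0$). Then the inner AH $x=0$ consists of radially outgoing null geodesics; radially outgoing null geodesics other than those on the inner AH never intersect the inner AH; and radially outgoing null geodesics inside the inner AH ($x<0$) satisfy $x(v)\to0$ as $v\to\infty$. Consequently, an event horizon exists.
   Context: Spherically symmetric spacetime $ds^2=-f(v,r)A(v,r)^2dv^2+2A(v,r)\,dr\,dv+r^2d\Omega^2$ with $A>0$, $f,A\to1$ as $r\to\infty$, $f(v,0)=1$, $\partial_rf(v,0)=\partial_rA(v,0)=0$; $f(v,\cdot)$ has exactly two zeros $r_+(v)>r_-(v)$ (outer/inner apparent horizons, AHs), $f=F(r-r_+)(r-r_-)$ with $F>0$, and $h=AF>0$. Assumptions: $\partial_v r_+<0$; $r_\pm(v)\to r_c$ as $v\to\infty$; the sign of $\partial_v r_-$ is constant; the $v\to\infty$ limits of $A,F,h$ behave as analytic functions of $r$, so all $\partial_r^n h$ converge as $v\to\infty$. With $x=r-r_c$, $x_\pm=r_\pm-r_c$ and $h$ regarded as a function of $(v,x)$, radially outgoing null geodesics solve $dx/dv=\tfrac12h(v,x)(x-x_+(v))(x-x_-(v))$. The event horizon is the boundary of the region from which outgoing null geodesics do not reach future null infinity ($x\to\infty$). *)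

theory Defs
  imports "HOL-Analysis.Analysis"
begin

text \<open>Right-hand side of the radially outgoing null geodesic equation
  dx/dv = 1/2 h(v,x) (x - x_+(v)) (x - x_-(v)), with x = r - r_c.\<close>
definition ngfield :: "(real \<Rightarrow> real \<Rightarrow> real) \<Rightarrow> (real \<Rightarrow> real) \<Rightarrow> (real \<Rightarrow> real)
    \<Rightarrow> real \<Rightarrow> real \<Rightarrow> real" where
  "ngfield h xp xm v x = 1/2 * h v x * (x - xp v) * (x - xm v)"

text \<open>A radially outgoing null geodesic, parametrised by v on a nonempty interval I,
  staying in the spacetime region r > 0, i.e. x > -r_c.\<close>
definition outgoing_null_geodesic :: "real \<Rightarrow> (real \<Rightarrow> real \<Rightarrow> real) \<Rightarrow> (real \<Rightarrow> real)
    \<Rightarrow> (real \<Rightarrow> real) \<Rightarrow> (real \<Rightarrow> real) \<Rightarrow> real set \<Rightarrow> bool" where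
  "outgoing_null_geodesic rc h xp xm \<gamma> I \<longleftrightarrow>
     is_interval I \<and> I \<noteq> {} \<and>
     (\<forall>v\<in>I. \<gamma> v > - rc \<and> (\<gamma> has_real_derivative ngfield h xp xm v (\<gamma> v)) (at v within I))"

definition reaches_scri :: "real \<Rightarrow> (real \<Rightarrow> real \<Rightarrow> real) \<Rightarrow> (real \<Rightarrow> real)
    \<Rightarrow> (real \<Rightarrow> real) \<Rightarrow> real \<Rightarrow> real \<Rightarrow> bool" where
  "reaches_scri rc h xp xm v0 x0 \<longleftrightarrow>
     (\<exists>\<gamma>. outgoing_null_geodesic rc h xp xm \<gamma> {v0..} \<and> \<gamma> v0 = x0 \<and> filterlim \<gamma> at_top at_top) \<or>
     (\<exists>b>v0. \<exists>\<gamma>. outgoing_null_geodesic rc h xp xm \<gamma> {v0..<b} \<and> \<gamma> v0 = x0 \<and>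
         filterlim \<gamma> at_top (at_left b))"

definition spacetime_domain :: "real \<Rightarrow> (real \<times> real) set" where
  "spacetime_domain rc = {p. snd p > - rc}"

definition trapped_region :: "real \<Rightarrow> (real \<Rightarrow> real \<Rightarrow> real) \<Rightarrow> (real \<Rightarrow> real)
    \<Rightarrow> (real \<Rightarrow> real) \<Rightarrow> (real \<times> real) set" where
  "trapped_region rc h xp xm = {(v, x). x > - rc \<and> \<not> reaches_scri rc h xp xm v x}"

definition event_horizon :: "real \<Rightarrow> (real \<Rightarrow> real \<Rightarrow> real) \<Rightarrow> (real \<Rightarrow> real)
    \<Rightarrow> (real \<Rightarrow> real) \<Rightarrow> (real \<times> real) set" where
  "event_horizon rc h xp xm = spacetime_domain rc \<inter> frontier (trapped_region rc h xp xm)"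

end

theory Submission
  imports Defs
begin


lemma deriv_nolimpt:
  fixes f :: "real \<Rightarrow> real"
  assumes "\<not> x islimpt T"
  shows "(f has_real_derivative D) (at x within T)"
proof -
  have "at x within T = bot" using assms trivial_limit_within by blast
  then show ?thesis
    by (simp add: has_field_derivative_def has_derivative_def bounded_linear_mult_right)
qed

lemma deriv_union:
  fixes f :: "real \<Rightarrow> real"
  assumes "(f has_real_derivative D) (at x within S)" "(f has_real_derivative D) (at x within T)"
  shows "(f has_real_derivative D) (at x within S \<union> T)"
proof -
  have "((\<lambda>y. (f y - f x) / (y - x)) \<longlongrightarrow> D) (at x within S \<union> T)"
    unfolding at_within_union using assms[unfolded has_field_derivative_iff]
    by (intro filterlim_sup) auto
  then show ?thesis unfolding has_field_derivative_iff .
qed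

lemma interval_sub:
  fixes I :: "real set"
  assumes "is_interval I" "p \<in> I" "q \<in> I"
  shows "{p..q} \<subseteq> I"
proof
  fix x assume x: "x \<in> {p..q}"
  have "\<forall>a\<in>I. \<forall>b\<in>I. \<forall>x. a \<le> x \<and> x \<le> b \<longrightarrow> x \<in> I" using assms(1) unfolding is_interval_1 .
  then show "x \<in> I" using assms(2,3) x atLeastAtMost_iff by meson
qed

lemma deriv_interior:
  fixes f :: "real \<Rightarrow> real"
  assumes "(f has_real_derivative D) (at x within I)" "{p<..<q} \<subseteq> I" "p < x" "x < q"
  shows "(f has_real_derivative D) (at x)"
proof -
  have "(f has_real_derivative D) (at x within {p<..<q})"
    using assms(1,2) by (rule DERIV_subset)
  moreover have "at x within {p<..<q} = at x" using assms(3,4) by (intro at_within_open) auto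
  ultimately show ?thesis by simp
qed

lemma deriv_cont_on:
  fixes f :: "real \<Rightarrow> real"
  assumes "\<forall>v\<in>I. (f has_real_derivative g v) (at v within I)"
  shows "continuous_on I f"
  unfolding continuous_on_eq_continuous_within
proof
  fix x assume "x \<in> I"
  show "continuous (at x within I) f" by (rule DERIV_continuous[OF assms[rule_format, OF \<open>x \<in> I\<close>]])
qed

lemma deriv_lower_bound:
  fixes \<gamma> g :: "real \<Rightarrow> real"
  assumes I: "is_interval I" and d: "\<forall>v\<in>I. (\<gamma> has_real_derivative g v) (at v within I)"
    and c: "\<forall>v\<in>I. g v \<ge> c" and pq: "p \<in> I" "q \<in> I" "p \<le> q"
  shows "\<gamma> q - \<gamma> p \<ge> c * (q - p)"
proof -
  have sub: "{p..q} \<subseteq> I" using interval_sub[OF I pq(1,2)] .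
  have cont: "continuous_on {p..q} (\<lambda>t. \<gamma> t - c * t)"
    using continuous_on_subset[OF deriv_cont_on[OF d] sub] by (intro continuous_intros)
  have "(\<lambda>t. \<gamma> t - c * t) p \<le> (\<lambda>t. \<gamma> t - c * t) q"
  proof (rule DERIV_nonneg_imp_increasing_open[OF pq(3) _ cont])
    fix x assume x: "p < x" "x < q"
    have "x \<in> I" using sub x by auto
    have sub2: "{p<..<q} \<subseteq> I" using sub by auto
    have "(\<gamma> has_real_derivative g x) (at x)"
      by (rule deriv_interior[OF d[rule_format, OF \<open>x \<in> I\<close>] sub2 x])
    then have "((\<lambda>t. \<gamma> t - c * t) has_real_derivative g x - c) (at x)"
      by (auto intro!: derivative_eq_intros)
    then show "\<exists>y. ((\<lambda>t. \<gamma> t - c * t) has_real_derivative y) (at x) \<and> 0 \<le> y"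
    proof -
      have "g x - c \<ge> 0" using c \<open>x \<in> I\<close> by auto
      then show ?thesis using \<open>((\<lambda>t. \<gamma> t - c * t) has_real_derivative g x - c) (at x)\<close> by blast
    qed
  qed
  then show ?thesis by (simp add: algebra_simps)
qed

lemma range_bounds:
  fixes \<gamma> :: "real \<Rightarrow> real"
  assumes "continuous_on {s..t} \<gamma>" "s \<le> t"
  shows "\<exists>v1\<in>{s..t}. \<exists>v2\<in>{s..t}. \<forall>v\<in>{s..t}. \<gamma> v1 \<le> \<gamma> v \<and> \<gamma> v \<le> \<gamma> v2"
proof -
  obtain v1 where "v1 \<in> {s..t}" "\<forall>v\<in>{s..t}. \<gamma> v1 \<le> \<gamma> v"
    using continuous_attains_inf[of "{s..t}" \<gamma>] assms by auto
  moreover obtain v2 where "v2 \<in> {s..t}" "\<forall>v\<in>{s..t}. \<gamma> v \<le> \<gamma> v2"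
    using continuous_attains_sup[of "{s..t}" \<gamma>] assms by auto
  ultimately show ?thesis by blast
qed



lemma ode_unique:
  fixes G :: "real \<Rightarrow> real \<Rightarrow> real" and lo :: real and \<gamma>1 \<gamma>2 :: "real \<Rightarrow> real"
  assumes lip: "\<forall>a b c d. lo < c \<longrightarrow> (\<exists>K\<ge>0. \<forall>v\<in>{a..b}. \<forall>x\<in>{c..d}. \<forall>y\<in>{c..d}. \<bar>G v x - G v y\<bar> \<le> K * \<bar>x - y\<bar>)"
    and I: "is_interval I"
    and d1: "\<forall>v\<in>I. (\<gamma>1 has_real_derivative G v (\<gamma>1 v)) (at v within I)"
    and d2: "\<forall>v\<in>I. (\<gamma>2 has_real_derivative G v (\<gamma>2 v)) (at v within I)"
    and pos1: "\<forall>v\<in>I. lo < \<gamma>1 v" and pos2: "\<forall>v\<in>I. lo < \<gamma>2 v"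
    and p: "p \<in> I" "\<gamma>1 p = \<gamma>2 p" and q: "q \<in> I"
  shows "\<gamma>1 q = \<gamma>2 q"
proof -
  have c1: "continuous_on I \<gamma>1" using deriv_cont_on[OF d1] .
  have c2: "continuous_on I \<gamma>2" using deriv_cont_on[OF d2] .
  define s where "s = min p q"
  define t where "t = max p q"
  have st: "s \<in> I" "t \<in> I" "s \<le> t" "p \<in> {s..t}" "q \<in> {s..t}" using p q by (auto simp: s_def t_def min_def max_def)
  have sub: "{s..t} \<subseteq> I" using interval_sub[OF I st(1,2)] .
  obtain u1 u2 where u: "u1 \<in> {s..t}" "u2 \<in> {s..t}" "\<forall>v\<in>{s..t}. \<gamma>1 u1 \<le> \<gamma>1 v \<and> \<gamma>1 v \<le> \<gamma>1 u2"
    using range_bounds[OF continuous_on_subset[OF c1 sub] st(3)] by blast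
  obtain w1 w2 where w: "w1 \<in> {s..t}" "w2 \<in> {s..t}" "\<forall>v\<in>{s..t}. \<gamma>2 w1 \<le> \<gamma>2 v \<and> \<gamma>2 v \<le> \<gamma>2 w2"
    using range_bounds[OF continuous_on_subset[OF c2 sub] st(3)] by blast
  define c where "c = min (\<gamma>1 u1) (\<gamma>2 w1)"
  define d where "d = max (\<gamma>1 u2) (\<gamma>2 w2)"
  have "u1 \<in> I" "w1 \<in> I" using sub u(1) w(1) by auto
  then have loc: "lo < c" using pos1 pos2 by (simp add: c_def)
  obtain K where K: "K \<ge> 0" "\<forall>v\<in>{s..t}. \<forall>x\<in>{c..d}. \<forall>y\<in>{c..d}. \<bar>G v x - G v y\<bar> \<le> K * \<bar>x - y\<bar>"
    using lip[rule_format, of c s t d, OF loc] by blast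
  have inb: "\<gamma>1 v \<in> {c..d}" "\<gamma>2 v \<in> {c..d}" if "v \<in> {s..t}" for v
  proof -
    have "\<gamma>1 u1 \<le> \<gamma>1 v \<and> \<gamma>1 v \<le> \<gamma>1 u2" "\<gamma>2 w1 \<le> \<gamma>2 v \<and> \<gamma>2 v \<le> \<gamma>2 w2"
      using u(3) w(3) that by blast+
    then show "\<gamma>1 v \<in> {c..d}" "\<gamma>2 v \<in> {c..d}" by (auto simp: c_def d_def)
  qed
  have prodb: "(\<gamma>1 v - \<gamma>2 v) * (G v (\<gamma>1 v) - G v (\<gamma>2 v)) \<le> K * (\<gamma>1 v - \<gamma>2 v)^2"
    and prodb2: "- (K * (\<gamma>1 v - \<gamma>2 v)^2) \<le> (\<gamma>1 v - \<gamma>2 v) * (G v (\<gamma>1 v) - G v (\<gamma>2 v))"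
    if "v \<in> {s..t}" for v
  proof -
    have "\<bar>G v (\<gamma>1 v) - G v (\<gamma>2 v)\<bar> \<le> K * \<bar>\<gamma>1 v - \<gamma>2 v\<bar>" using K(2)[rule_format, OF that inb[OF that]] .
    then have "\<bar>(\<gamma>1 v - \<gamma>2 v) * (G v (\<gamma>1 v) - G v (\<gamma>2 v))\<bar> \<le> \<bar>\<gamma>1 v - \<gamma>2 v\<bar> * (K * \<bar>\<gamma>1 v - \<gamma>2 v\<bar>)"
      unfolding abs_mult by (intro mult_left_mono) auto
    also have "\<dots> = K * (\<gamma>1 v - \<gamma>2 v)^2" by (simp add: power2_eq_square abs_mult_self_eq)
    finally show "(\<gamma>1 v - \<gamma>2 v) * (G v (\<gamma>1 v) - G v (\<gamma>2 v)) \<le> K * (\<gamma>1 v - \<gamma>2 v)^2"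
      "- (K * (\<gamma>1 v - \<gamma>2 v)^2) \<le> (\<gamma>1 v - \<gamma>2 v) * (G v (\<gamma>1 v) - G v (\<gamma>2 v))" by linarith+
  qed
  have subo: "{s<..<t} \<subseteq> I" using sub by auto
  have dat: "(\<gamma>1 has_real_derivative G x (\<gamma>1 x)) (at x)" "(\<gamma>2 has_real_derivative G x (\<gamma>2 x)) (at x)"
    if "s < x" "x < t" for x
  proof -
    have xI: "x \<in> I" using subo that by auto
    show "(\<gamma>1 has_real_derivative G x (\<gamma>1 x)) (at x)"
      by (rule deriv_interior[OF d1[rule_format, OF xI] subo that])
    show "(\<gamma>2 has_real_derivative G x (\<gamma>2 x)) (at x)"
      by (rule deriv_interior[OF d2[rule_format, OF xI] subo that])
  qed
  have contst: "continuous_on {s..t} \<gamma>1" "continuous_on {s..t} \<gamma>2"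
    using continuous_on_subset[OF c1 sub] continuous_on_subset[OF c2 sub] by auto
  show ?thesis
  proof (cases "p \<le> q")
    case True
    then have ps: "s = p" "t = q" by (auto simp: s_def t_def)
    define W :: "real \<Rightarrow> real" where "W = (\<lambda>v. (\<gamma>1 v - \<gamma>2 v)^2 * exp (-2*K * v))"
    have "W t \<le> W s"
    proof (rule DERIV_nonpos_imp_decreasing_open[OF st(3)])
      fix x assume x: "s < x" "x < t"
      have "(W has_real_derivative
          (2 * (\<gamma>1 x - \<gamma>2 x) * (G x (\<gamma>1 x) - G x (\<gamma>2 x)) * exp (-2*K*x)
           + (\<gamma>1 x - \<gamma>2 x)^2 * (exp (-2*K*x) * (-2*K)))) (at x)"
        unfolding W_def
      proof (rule DERIV_cong[OF DERIV_mult])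
        have h1: "((\<lambda>v. \<gamma>1 v - \<gamma>2 v) has_real_derivative (G x (\<gamma>1 x) - G x (\<gamma>2 x))) (at x)"
          using dat[OF x] by (rule DERIV_diff)
        show "((\<lambda>v. (\<gamma>1 v - \<gamma>2 v)^2) has_real_derivative 2 * (\<gamma>1 x - \<gamma>2 x) * (G x (\<gamma>1 x) - G x (\<gamma>2 x))) (at x)"
          by (rule DERIV_cong[OF DERIV_power[OF h1, of 2]]) (simp add: algebra_simps)
        show "((\<lambda>v. exp (-2*K * v)) has_real_derivative exp (-2*K*x) * (-2*K)) (at x)"
          by (auto intro!: derivative_eq_intros)
      qed (simp add: algebra_simps)
      moreover have "2 * (\<gamma>1 x - \<gamma>2 x) * (G x (\<gamma>1 x) - G x (\<gamma>2 x)) * exp (-2*K*x)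
           + (\<gamma>1 x - \<gamma>2 x)^2 * (exp (-2*K*x) * (-2*K)) \<le> 0"
      proof -
        have "(\<gamma>1 x - \<gamma>2 x) * (G x (\<gamma>1 x) - G x (\<gamma>2 x)) - K * (\<gamma>1 x - \<gamma>2 x)^2 \<le> 0"
          using prodb[of x] x by auto
        then have "2 * exp (-2*K*x) * ((\<gamma>1 x - \<gamma>2 x) * (G x (\<gamma>1 x) - G x (\<gamma>2 x)) - K * (\<gamma>1 x - \<gamma>2 x)^2) \<le> 0"
          by (simp add: mult_nonneg_nonpos)
        then show ?thesis by (simp add: algebra_simps)
      qed
      ultimately show "\<exists>y. (W has_real_derivative y) (at x) \<and> y \<le> 0" by blast
    next
      show "continuous_on {s..t} W" unfolding W_def using contst by (intro continuous_intros)
    qed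
    moreover have "W s = 0" using p ps by (simp add: W_def)
    moreover have "W t \<ge> 0" by (simp add: W_def)
    ultimately have "W t = 0" by linarith
    then show ?thesis using ps by (simp add: W_def)
  next
    case False
    then have ps: "s = q" "t = p" by (auto simp: s_def t_def)
    define W :: "real \<Rightarrow> real" where "W = (\<lambda>v. (\<gamma>1 v - \<gamma>2 v)^2 * exp (2*K * v))"
    have "W s \<le> W t"
    proof (rule DERIV_nonneg_imp_increasing_open[OF st(3)])
      fix x assume x: "s < x" "x < t"
      have "(W has_real_derivative
          (2 * (\<gamma>1 x - \<gamma>2 x) * (G x (\<gamma>1 x) - G x (\<gamma>2 x)) * exp (2*K*x)
           + (\<gamma>1 x - \<gamma>2 x)^2 * (exp (2*K*x) * (2*K)))) (at x)"
        unfolding W_def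
      proof (rule DERIV_cong[OF DERIV_mult])
        have h1: "((\<lambda>v. \<gamma>1 v - \<gamma>2 v) has_real_derivative (G x (\<gamma>1 x) - G x (\<gamma>2 x))) (at x)"
          using dat[OF x] by (rule DERIV_diff)
        show "((\<lambda>v. (\<gamma>1 v - \<gamma>2 v)^2) has_real_derivative 2 * (\<gamma>1 x - \<gamma>2 x) * (G x (\<gamma>1 x) - G x (\<gamma>2 x))) (at x)"
          by (rule DERIV_cong[OF DERIV_power[OF h1, of 2]]) (simp add: algebra_simps)
        show "((\<lambda>v. exp (2*K * v)) has_real_derivative exp (2*K*x) * (2*K)) (at x)"
          by (auto intro!: derivative_eq_intros)
      qed (simp add: algebra_simps)
      moreover have "0 \<le> 2 * (\<gamma>1 x - \<gamma>2 x) * (G x (\<gamma>1 x) - G x (\<gamma>2 x)) * exp (2*K*x)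
           + (\<gamma>1 x - \<gamma>2 x)^2 * (exp (2*K*x) * (2*K))"
      proof -
        have "0 \<le> (\<gamma>1 x - \<gamma>2 x) * (G x (\<gamma>1 x) - G x (\<gamma>2 x)) + K * (\<gamma>1 x - \<gamma>2 x)^2"
          using prodb2[of x] x by auto
        then have "0 \<le> 2 * exp (2*K*x) * ((\<gamma>1 x - \<gamma>2 x) * (G x (\<gamma>1 x) - G x (\<gamma>2 x)) + K * (\<gamma>1 x - \<gamma>2 x)^2)"
          by simp
        then show ?thesis by (simp add: algebra_simps)
      qed
      ultimately show "\<exists>y. (W has_real_derivative y) (at x) \<and> 0 \<le> y" by blast
    next
      show "continuous_on {s..t} W" unfolding W_def using contst by (intro continuous_intros)
    qed
    moreover have "W t = 0" using p ps by (simp add: W_def)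
    moreover have "W s \<ge> 0" by (simp add: W_def)
    ultimately have "W s = 0" by linarith
    then show ?thesis using ps by (simp add: W_def)
  qed
qed



lemma clamp_lip: "(a::real) \<le> b \<Longrightarrow> \<bar>max a (min b x) - max a (min b y)\<bar> \<le> \<bar>x - y\<bar>"
  unfolding max_def min_def by auto

lemma clamp_range: "(a::real) \<le> b \<Longrightarrow> max a (min b x) \<in> {a..b}"
  by auto

lemma cont_bound_box:
  fixes G :: "real \<Rightarrow> real \<Rightarrow> real"
  assumes "continuous_on S (\<lambda>p. G (fst p) (snd p))" "compact S"
  shows "\<exists>M>0. \<forall>p\<in>S. \<bar>G (fst p) (snd p)\<bar> \<le> M"
proof -
  have "compact ((\<lambda>p. G (fst p) (snd p)) ` S)" using compact_continuous_image assms by blast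
  then have "bounded ((\<lambda>p. G (fst p) (snd p)) ` S)" by (rule compact_imp_bounded)
  then obtain M where "M > 0" "\<forall>z\<in>(\<lambda>p. G (fst p) (snd p)) ` S. norm z \<le> M"
    unfolding bounded_pos by blast
  then show ?thesis by auto
qed

lemma picard_step:
  fixes G :: "real \<Rightarrow> real \<Rightarrow> real" and a \<delta> y0 M K :: real
  assumes Gc: "continuous_on UNIV (\<lambda>p. G (fst p) (snd p))"
    and dpos: "\<delta> > 0"
    and Mb: "\<forall>t\<in>{a..a+\<delta>}. \<forall>y\<in>{y0-1..y0+1}. \<bar>G t y\<bar> \<le> M"
    and Kb: "\<forall>t\<in>{a..a+\<delta>}. \<forall>x\<in>{y0-1..y0+1}. \<forall>y\<in>{y0-1..y0+1}. \<bar>G t x - G t y\<bar> \<le> K * \<bar>x - y\<bar>"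
    and K0: "K \<ge> 0" and dM: "\<delta> * M \<le> 1" and dK: "\<delta> * K \<le> 1/2"
  shows "\<exists>\<phi>. \<phi> a = y0 \<and> (\<forall>v\<in>{a..a+\<delta>}. (\<phi> has_real_derivative G v (\<phi> v)) (at v within {a..a+\<delta>}))"
proof -
  define cl where "cl v = max a (min (a+\<delta>) v)" for v
  define cy where "cy y = max (y0-1) (min (y0+1) y)" for y
  have cl_r: "cl v \<in> {a..a+\<delta>}" for v using dpos by (simp add: cl_def)
  have cy_r: "cy y \<in> {y0-1..y0+1}" for y by (simp add: cy_def)
  have cy_l: "\<bar>cy x - cy y\<bar> \<le> \<bar>x - y\<bar>" for x y unfolding cy_def by (rule clamp_lip) simp
  have cl_c: "continuous_on UNIV cl" unfolding cl_def by (intro continuous_intros)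
  have cy_c: "continuous_on UNIV cy" unfolding cy_def by (intro continuous_intros)
  have M0: "M \<ge> 0" using Mb[rule_format, of a y0] dpos by auto
  have fc: "continuous_on UNIV (\<lambda>t. G t (cy (f t)))" if "continuous_on UNIV f" for f
  proof -
    have "continuous_on UNIV (\<lambda>t. (t, cy (f t)))"
      using continuous_on_compose2[OF cy_c that] by (intro continuous_intros) auto
    from continuous_on_compose2[OF Gc this] show ?thesis by simp
  qed
  have fb: "\<bar>G t (cy (f t))\<bar> \<le> M" if "t \<in> {a..a+\<delta>}" for t f
    using Mb that cy_r by blast
  define Pf where "Pf f v = y0 + integral {a..cl v} (\<lambda>t. G t (cy (f t)))" for f :: "real \<Rightarrow> real" and v
  have ib: "\<bar>integral {a..u} (\<lambda>t. G t (cy (f t)))\<bar> \<le> M * (u - a)"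
    if "continuous_on UNIV f" "u \<in> {a..a+\<delta>}" for f u
  proof -
    have "norm (integral {a..u} (\<lambda>t. G t (cy (f t)))) \<le> M * (u - a)"
      using that(2) by (intro integral_bound continuous_on_subset[OF fc[OF that(1)]] ) (auto intro!: fb)
    then show ?thesis by simp
  qed
  have Pin: "Pf f \<in> bcontfun" if fcont: "continuous_on UNIV f" for f
  proof (rule bcontfun_normI)
    have "continuous_on {a..a+\<delta>} (\<lambda>u. integral {a..u} (\<lambda>t. G t (cy (f t))))"
      by (intro indefinite_integral_continuous_1 integrable_continuous_real continuous_on_subset[OF fc[OF fcont]]) auto
    then have "continuous_on UNIV (\<lambda>v. integral {a..cl v} (\<lambda>t. G t (cy (f t))))"
      using continuous_on_compose2[OF _ cl_c, of "{a..a+\<delta>}"] cl_r by blast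
    then show "continuous_on UNIV (Pf f)" unfolding Pf_def by (intro continuous_intros)
  next
    fix v
    have "\<bar>integral {a..cl v} (\<lambda>t. G t (cy (f t)))\<bar> \<le> M * (cl v - a)" using ib[OF fcont cl_r] .
    also have "\<dots> \<le> M * \<delta>" using cl_r[of v] M0 by (intro mult_left_mono) auto
    finally show "norm (Pf f v) \<le> \<bar>y0\<bar> + M * \<delta>" unfolding Pf_def by simp
  qed
  define P where "P \<phi> = Bcontfun (Pf (apply_bcontfun \<phi>))" for \<phi> :: "real \<Rightarrow>\<^sub>C real"
  have Pap: "apply_bcontfun (P \<phi>) = Pf (apply_bcontfun \<phi>)" for \<phi>
    unfolding P_def using Pin[OF continuous_on_apply_bcontfun] by (simp add: Bcontfun_inverse)
  have contr: "dist (P \<phi>) (P \<psi>) \<le> (1/2) * dist \<phi> \<psi>" for \<phi> \<psi>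
  proof (rule dist_bound)
    fix v
    let ?f = "\<lambda>t. G t (cy (apply_bcontfun \<phi> t))"
    let ?g = "\<lambda>t. G t (cy (apply_bcontfun \<psi> t))"
    have cf: "continuous_on {a..cl v} ?f" "continuous_on {a..cl v} ?g"
      by (auto intro!: continuous_on_subset[OF fc])
    have av: "a \<le> cl v" using cl_r[of v] by simp
    have "dist (apply_bcontfun (P \<phi>) v) (apply_bcontfun (P \<psi>) v) = \<bar>integral {a..cl v} ?f - integral {a..cl v} ?g\<bar>"
      unfolding Pap Pf_def dist_real_def by simp
    also have "\<dots> = \<bar>integral {a..cl v} (\<lambda>t. ?f t - ?g t)\<bar>"
      using cf by (simp add: integral_diff integrable_continuous_real)
    also have "\<dots> \<le> (K * dist \<phi> \<psi>) * (cl v - a)"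
    proof -
      have "norm (integral {a..cl v} (\<lambda>t. ?f t - ?g t)) \<le> (K * dist \<phi> \<psi>) * (cl v - a)"
      proof (rule integral_bound[OF av])
        show "continuous_on {a..cl v} (\<lambda>t. ?f t - ?g t)" using cf by (intro continuous_intros)
        fix t assume t: "t \<in> {a..cl v}"
        then have t': "t \<in> {a..a+\<delta>}" using cl_r[of v] by auto
        have "\<bar>?f t - ?g t\<bar> \<le> K * \<bar>cy (apply_bcontfun \<phi> t) - cy (apply_bcontfun \<psi> t)\<bar>"
          using Kb t' cy_r by blast
        also have "\<dots> \<le> K * \<bar>apply_bcontfun \<phi> t - apply_bcontfun \<psi> t\<bar>"
          using K0 cy_l by (intro mult_left_mono) auto
        also have "\<dots> \<le> K * dist \<phi> \<psi>"
          using K0 dist_bounded[of \<phi> t \<psi>] by (intro mult_left_mono) (auto simp: dist_real_def)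
        finally show "norm (?f t - ?g t) \<le> K * dist \<phi> \<psi>" by simp
      qed
      then show ?thesis by simp
    qed
    also have "\<dots> \<le> (K * dist \<phi> \<psi>) * \<delta>"
      using cl_r[of v] K0 by (intro mult_left_mono) auto
    also have "\<dots> = (\<delta> * K) * dist \<phi> \<psi>" by simp
    also have "\<dots> \<le> (1/2) * dist \<phi> \<psi>" using dK by (intro mult_right_mono) auto
    finally show "dist (apply_bcontfun (P \<phi>) v) (apply_bcontfun (P \<psi>) v) \<le> (1/2) * dist \<phi> \<psi>" .
  qed
  obtain \<phi> where fixp: "P \<phi> = \<phi>"
    using banach_fix_type[of "1/2" P] contr by auto
  define \<gamma> where "\<gamma> = apply_bcontfun \<phi>"
  have geq: "\<gamma> v = Pf \<gamma> v" for v
    using Pap[of \<phi>] fixp unfolding \<gamma>_def by metis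
  have gc: "continuous_on UNIV \<gamma>" unfolding \<gamma>_def by simp
  have clid: "cl v = v" if "v \<in> {a..a+\<delta>}" for v using that by (auto simp: cl_def)
  have g_on: "\<gamma> v = y0 + integral {a..v} (\<lambda>t. G t (cy (\<gamma> t)))" if "v \<in> {a..a+\<delta>}" for v
    using geq[of v] clid[OF that] unfolding Pf_def by simp
  have g_a: "\<gamma> a = y0" using g_on[of a] dpos by simp
  have g_near: "\<gamma> v \<in> {y0-1..y0+1}" if "v \<in> {a..a+\<delta>}" for v
  proof -
    have "\<bar>\<gamma> v - y0\<bar> \<le> M * (v - a)" using g_on[OF that] ib[OF gc that] by simp
    also have "\<dots> \<le> M * \<delta>" using that M0 by (intro mult_left_mono) auto
    finally show ?thesis using dM by (auto simp: algebra_simps abs_le_iff)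
  qed
  have cyid: "cy (\<gamma> v) = \<gamma> v" if "v \<in> {a..a+\<delta>}" for v
    using g_near[OF that] by (auto simp: cy_def)
  have "(\<gamma> has_real_derivative G v (\<gamma> v)) (at v within {a..a+\<delta>})" if v: "v \<in> {a..a+\<delta>}" for v
  proof -
    have c1: "continuous_on {a..a+\<delta>} (\<lambda>t. G t (cy (\<gamma> t)))"
      by (rule continuous_on_subset[OF fc[OF gc]]) auto
    have "((\<lambda>u. integral {a..u} (\<lambda>t. G t (cy (\<gamma> t)))) has_real_derivative G v (cy (\<gamma> v))) (at v within {a..a+\<delta>})"
      unfolding has_real_derivative_iff_has_vector_derivative
      by (rule integral_has_vector_derivative[OF c1 v])
    then have "((\<lambda>u. y0 + integral {a..u} (\<lambda>t. G t (cy (\<gamma> t)))) has_real_derivative G v (cy (\<gamma> v))) (at v within {a..a+\<delta>})"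
      by (auto intro!: derivative_eq_intros)
    then have "(\<gamma> has_real_derivative G v (cy (\<gamma> v))) (at v within {a..a+\<delta>})"
      by (rule has_field_derivative_transform_within[where d=1]) (use v g_on in auto)
    then show ?thesis using cyid[OF v] by simp
  qed
  then show ?thesis using g_a by blast
qed



definition isol :: "(real \<Rightarrow> real \<Rightarrow> real) \<Rightarrow> (real \<Rightarrow> real) \<Rightarrow> real set \<Rightarrow> bool" where
  "isol G \<gamma> I \<longleftrightarrow> (\<forall>v\<in>I. (\<gamma> has_real_derivative G v (\<gamma> v)) (at v within I))"

lemma isol_subset: "isol G \<gamma> I \<Longrightarrow> J \<subseteq> I \<Longrightarrow> isol G \<gamma> J"
  unfolding isol_def using DERIV_subset by blast

lemma local_exist:
  fixes G :: "real \<Rightarrow> real \<Rightarrow> real"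
  assumes Gc: "continuous_on UNIV (\<lambda>p. G (fst p) (snd p))"
    and Gl: "\<forall>a b c d. \<exists>K\<ge>0. \<forall>v\<in>{a..b}. \<forall>x\<in>{c..d}. \<forall>y\<in>{c..d}. \<bar>G v x - G v y\<bar> \<le> K * \<bar>x - y\<bar>"
  shows "\<exists>\<delta>>0. \<forall>a\<in>{A..B}. \<forall>y0\<in>{-Y..Y}. \<exists>\<phi>. \<phi> a = y0 \<and> isol G \<phi> {a..a+\<delta>}"
proof -
  have "compact ({A..B+1} \<times> {-Y-1..Y+1})" by (intro compact_Times compact_Icc)
  then obtain M where M: "M > 0" "\<forall>p\<in>{A..B+1} \<times> {-Y-1..Y+1}. \<bar>G (fst p) (snd p)\<bar> \<le> M"
    using cont_bound_box[OF continuous_on_subset[OF Gc]] by blast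
  obtain K where K: "K \<ge> 0" "\<forall>v\<in>{A..B+1}. \<forall>x\<in>{-Y-1..Y+1}. \<forall>y\<in>{-Y-1..Y+1}. \<bar>G v x - G v y\<bar> \<le> K * \<bar>x - y\<bar>"
    using Gl[THEN spec[of _ A], THEN spec[of _ "B+1"], THEN spec[of _ "-Y-1"], THEN spec[of _ "Y+1"]] by blast
  define \<delta> where "\<delta> = min 1 (min (1/M) (1/(2*K+2)))"
  have dpos: "\<delta> > 0" using M K by (simp add: \<delta>_def)
  have d1: "\<delta> \<le> 1" by (simp add: \<delta>_def)
  have dM: "\<delta> * M \<le> 1"
  proof -
    have "\<delta> \<le> 1/M" by (simp add: \<delta>_def)
    then have "\<delta> * M \<le> (1/M) * M" using M by (intro mult_right_mono) auto
    then show ?thesis using M by simp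
  qed
  have dK: "\<delta> * K \<le> 1/2"
  proof -
    have "\<delta> \<le> 1/(2*K+2)" by (simp add: \<delta>_def)
    then have "\<delta> * (2*K+2) \<le> 1" using K by (simp add: field_simps)
    then show ?thesis using dpos by (simp add: algebra_simps)
  qed
  show ?thesis
  proof (intro exI[of _ \<delta>] conjI ballI dpos)
    fix a y0 assume a: "a \<in> {A..B}" and y: "y0 \<in> {-Y..Y}"
    have Mb: "\<forall>t\<in>{a..a+\<delta>}. \<forall>y\<in>{y0-1..y0+1}. \<bar>G t y\<bar> \<le> M"
    proof (intro ballI)
      fix t y assume "t \<in> {a..a+\<delta>}" "y \<in> {y0-1..y0+1}"
      then have "(t, y) \<in> {A..B+1} \<times> {-Y-1..Y+1}" using a y d1 by auto
      then show "\<bar>G t y\<bar> \<le> M" using M(2) by fastforce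
    qed
    have Kb: "\<forall>t\<in>{a..a+\<delta>}. \<forall>x\<in>{y0-1..y0+1}. \<forall>y\<in>{y0-1..y0+1}. \<bar>G t x - G t y\<bar> \<le> K * \<bar>x - y\<bar>"
    proof (intro ballI)
      fix t x y assume "t \<in> {a..a+\<delta>}" "x \<in> {y0-1..y0+1}" "y \<in> {y0-1..y0+1}"
      then have "t \<in> {A..B+1}" "x \<in> {-Y-1..Y+1}" "y \<in> {-Y-1..Y+1}" using a y d1 by auto
      then show "\<bar>G t x - G t y\<bar> \<le> K * \<bar>x - y\<bar>" using K(2) by blast
    qed
    show "\<exists>\<phi>. \<phi> a = y0 \<and> isol G \<phi> {a..a+\<delta>}"
      using picard_step[OF Gc dpos Mb Kb K(1) dM dK] unfolding isol_def .
  qed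
qed

lemma isol_mono:
  assumes "isol G \<gamma> I" "is_interval I" "\<forall>v\<in>I. G v (\<gamma> v) \<ge> 0" "p \<in> I" "q \<in> I" "p \<le> q"
  shows "\<gamma> p \<le> \<gamma> q"
proof -
  have d: "\<forall>v\<in>I. (\<gamma> has_real_derivative G v (\<gamma> v)) (at v within I)" using assms(1) unfolding isol_def .
  from deriv_lower_bound[OF assms(2) d assms(3) assms(4-6)] show ?thesis by simp
qed

lemma not_limpt_Icc: "v \<notin> {a..b} \<Longrightarrow> \<not> v islimpt {a..(b::real)}"
  using closed_limpt closed_atLeastAtMost by blast

lemma isol_glue:
  fixes G :: "real \<Rightarrow> real \<Rightarrow> real"
  assumes g: "isol G \<gamma> {v0..t}" and f: "isol G \<phi> {t..t+\<delta>}" and eq: "\<phi> t = \<gamma> t"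
    and vt: "v0 \<le> t" and dpos: "\<delta> > 0"
  shows "isol G (\<lambda>v. if v \<le> t then \<gamma> v else \<phi> v) {v0..t+\<delta>}"
  unfolding isol_def
proof
  fix v assume v: "v \<in> {v0..t+\<delta>}"
  define \<psi> where "\<psi> = (\<lambda>v. if v \<le> t then \<gamma> v else \<phi> v)"
  have "(\<psi> has_real_derivative G v (\<psi> v)) (at v within {v0..t} \<union> {t..t+\<delta>})"
  proof (rule deriv_union)
    show "(\<psi> has_real_derivative G v (\<psi> v)) (at v within {v0..t})"
    proof (cases "v \<le> t")
      case True
      then have vi: "v \<in> {v0..t}" using v by auto
      have dg: "(\<gamma> has_real_derivative G v (\<gamma> v)) (at v within {v0..t})" using g vi unfolding isol_def by blast
      have "(\<psi> has_real_derivative G v (\<gamma> v)) (at v within {v0..t})"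
        by (rule has_field_derivative_transform_within[OF dg zero_less_one vi]) (simp add: \<psi>_def)
      then show ?thesis using True by (simp add: \<psi>_def)
    next
      case False
      then have "v \<notin> {v0..t}" by simp
      then have "\<not> v islimpt {v0..t}" by (rule not_limpt_Icc)
      then show ?thesis by (rule deriv_nolimpt)
    qed
    show "(\<psi> has_real_derivative G v (\<psi> v)) (at v within {t..t+\<delta>})"
    proof (cases "t \<le> v")
      case True
      then have vi: "v \<in> {t..t+\<delta>}" using v by auto
      have df: "(\<phi> has_real_derivative G v (\<phi> v)) (at v within {t..t+\<delta>})" using f vi unfolding isol_def by blast
      have pe: "\<psi> x = \<phi> x" if "x \<in> {t..t+\<delta>}" for x using that eq by (auto simp: \<psi>_def)
      have "(\<psi> has_real_derivative G v (\<phi> v)) (at v within {t..t+\<delta>})"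
        by (rule has_field_derivative_transform_within[OF df zero_less_one vi]) (simp add: pe)
      then show ?thesis using pe[OF vi] by simp
    next
      case False
      then have "v \<notin> {t..t+\<delta>}" by simp
      then have "\<not> v islimpt {t..t+\<delta>}" by (rule not_limpt_Icc)
      then show ?thesis by (rule deriv_nolimpt)
    qed
  qed
  moreover have "{v0..t} \<union> {t..t+\<delta>} = {v0..t+\<delta>}" using vt dpos by auto
  ultimately show "((\<lambda>v. if v \<le> t then \<gamma> v else \<phi> v) has_real_derivative
      G v (if v \<le> t then \<gamma> v else \<phi> v)) (at v within {v0..t+\<delta>})" by (simp add: \<psi>_def)
qed



lemma max_sol:
  fixes G :: "real \<Rightarrow> real \<Rightarrow> real" and v0 x0 :: real
  assumes Gc: "continuous_on UNIV (\<lambda>p. G (fst p) (snd p))"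
    and Gl: "\<forall>a b c d. \<exists>K\<ge>0. \<forall>v\<in>{a..b}. \<forall>x\<in>{c..d}. \<forall>y\<in>{c..d}. \<bar>G v x - G v y\<bar> \<le> K * \<bar>x - y\<bar>"
    and Gpos: "\<forall>v x. v0 \<le> v \<longrightarrow> G v x > 0"
  shows "(\<exists>\<gamma>. \<gamma> v0 = x0 \<and> isol G \<gamma> {v0..}) \<or>
         (\<exists>b>v0. \<exists>\<gamma>. \<gamma> v0 = x0 \<and> isol G \<gamma> {v0..<b} \<and> (\<forall>Z. \<exists>t\<in>{v0..<b}. Z < \<gamma> t))"
proof -
  define S where "S = {b. v0 < b \<and> (\<exists>\<gamma>. \<gamma> v0 = x0 \<and> isol G \<gamma> {v0..b})}"
  have Gnn: "0 \<le> G v y" if "v0 \<le> v" for v y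
  proof -
    have "G v y > 0" using Gpos that by blast
    then show ?thesis by simp
  qed
  have solmono: "\<gamma> v0 \<le> \<gamma> v" if "isol G \<gamma> {v0..b}" "v \<in> {v0..b}" for \<gamma> b v
  proof -
    have nn: "\<forall>u\<in>{v0..b}. G u (\<gamma> u) \<ge> 0" using Gnn by simp
    have v0i: "v0 \<in> {v0..b}" using that(2) by simp
    show ?thesis by (rule isol_mono[OF that(1) is_interval_cc nn v0i that(2)]) (use that(2) in simp)
  qed
  have agree: "\<gamma>1 v = \<gamma>2 v" if s1: "isol G \<gamma>1 {v0..b1}" and s2: "isol G \<gamma>2 {v0..b2}"
    and e1: "\<gamma>1 v0 = x0" and e2: "\<gamma>2 v0 = x0" and v: "v0 \<le> v" "v \<le> b1" "v \<le> b2" for \<gamma>1 \<gamma>2 b1 b2 v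
  proof -
    define m where "m = min b1 b2"
    have s1': "isol G \<gamma>1 {v0..m}" by (rule isol_subset[OF s1]) (simp add: m_def)
    have s2': "isol G \<gamma>2 {v0..m}" by (rule isol_subset[OF s2]) (simp add: m_def)
    have p1: "\<forall>u\<in>{v0..m}. x0 - 1 < \<gamma>1 u"
    proof
      fix u assume "u \<in> {v0..m}"
      then have "u \<in> {v0..b1}" by (simp add: m_def)
      then have "\<gamma>1 v0 \<le> \<gamma>1 u" by (rule solmono[OF s1])
      then show "x0 - 1 < \<gamma>1 u" using e1 by simp
    qed
    have p2: "\<forall>u\<in>{v0..m}. x0 - 1 < \<gamma>2 u"
    proof
      fix u assume "u \<in> {v0..m}"
      then have "u \<in> {v0..b2}" by (simp add: m_def)
      then have "\<gamma>2 v0 \<le> \<gamma>2 u" by (rule solmono[OF s2])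
      then show "x0 - 1 < \<gamma>2 u" using e2 by simp
    qed
    have lip: "\<forall>a b c d. x0 - 1 < c \<longrightarrow> (\<exists>K\<ge>0. \<forall>v\<in>{a..b}. \<forall>x\<in>{c..d}. \<forall>y\<in>{c..d}. \<bar>G v x - G v y\<bar> \<le> K * \<bar>x - y\<bar>)"
      using Gl by blast
    have vm: "v \<in> {v0..m}" using v by (simp add: m_def)
    have v0m: "v0 \<in> {v0..m}" using v by (simp add: m_def)
    show ?thesis
      by (rule ode_unique[OF lip is_interval_cc s1'[unfolded isol_def] s2'[unfolded isol_def] p1 p2 v0m _ vm])
        (simp add: e1 e2)
  qed
  obtain \<delta>0 where d0: "\<delta>0 > 0" "\<forall>a\<in>{v0..v0}. \<forall>y0\<in>{-\<bar>x0\<bar>..\<bar>x0\<bar>}. \<exists>\<phi>. \<phi> a = y0 \<and> isol G \<phi> {a..a+\<delta>0}"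
    using local_exist[OF Gc Gl, of v0 v0 "\<bar>x0\<bar>"] by blast
  have x0in: "x0 \<in> {-\<bar>x0\<bar>..\<bar>x0\<bar>}" by (cases "x0 \<ge> 0") auto
  have v0in: "v0 \<in> {v0..v0}" by simp
  have "\<exists>\<phi>. \<phi> v0 = x0 \<and> isol G \<phi> {v0..v0+\<delta>0}" by (rule d0(2)[rule_format, OF v0in x0in])
  then have S0: "v0 + \<delta>0 \<in> S" unfolding S_def using d0(1) by auto
  define sel where "sel v = (SOME \<gamma>. \<exists>b. v < b \<and> \<gamma> v0 = x0 \<and> isol G \<gamma> {v0..b})" for v
  define \<Gamma> where "\<Gamma> v = sel v v" for v
  have \<Gamma>eq: "\<Gamma> v = \<gamma> v" if g: "\<gamma> v0 = x0" "isol G \<gamma> {v0..b}" and v: "v0 \<le> v" "v < b" for \<gamma> b v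
  proof -
    have ex: "\<exists>\<gamma>. \<exists>b. v < b \<and> \<gamma> v0 = x0 \<and> isol G \<gamma> {v0..b}" using g v by blast
    obtain b' where b': "v < b'" "sel v v0 = x0" "isol G (sel v) {v0..b'}"
      using someI_ex[OF ex] unfolding sel_def by blast
    have "sel v v = \<gamma> v"
      by (rule agree[OF b'(3) g(2) b'(2) g(1) v(1)]) (use b'(1) v in auto)
    then show ?thesis by (simp add: \<Gamma>_def)
  qed
  have \<Gamma>v0: "\<Gamma> v0 = x0"
  proof -
    obtain \<gamma> where "\<gamma> v0 = x0" "isol G \<gamma> {v0..v0+\<delta>0}" using S0 unfolding S_def by blast
    then show ?thesis using \<Gamma>eq[of \<gamma> "v0+\<delta>0" v0] d0(1) by simp
  qed
  have \<Gamma>deriv: "(\<Gamma> has_real_derivative G v (\<Gamma> v)) (at v within J)"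
    if vJ: "v \<in> J" and J: "J \<subseteq> {v0..}" and bS: "b \<in> S" and vb: "v < b" and Jb: "J \<inter> {..<b} = {v0..<b}" for v J b
  proof -
    obtain \<gamma> where g: "\<gamma> v0 = x0" "isol G \<gamma> {v0..b}" using bS unfolding S_def by blast
    have vv0: "v0 \<le> v" using vJ J by auto
    have vI: "v \<in> {v0..b}" using vv0 vb by simp
    have dg: "(\<gamma> has_real_derivative G v (\<gamma> v)) (at v within {v0..b})" using g(2) vI unfolding isol_def by blast
    have e2: "{v0..b} \<inter> {..<b} = {v0..<b}" by auto
    have sets: "J \<inter> {..<b} - {v} = {v0..b} \<inter> {..<b} - {v}" unfolding Jb e2 by (rule refl)
    have vin: "v \<in> {..<b}" using vb by simp
    have ob: "open {..<b}" by simp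
    have "at v within {v0..b} = at v within J"
      by (rule at_within_nhd[OF vin ob sets[symmetric]])
    then have dg': "(\<gamma> has_real_derivative G v (\<gamma> v)) (at v within J)" using dg by simp
    have bv: "0 < b - v" using vb by simp
    have "(\<Gamma> has_real_derivative G v (\<gamma> v)) (at v within J)"
    proof (rule has_field_derivative_transform_within[OF dg' bv vJ])
      fix x assume x: "x \<in> J" "dist x v < b - v"
      then have "x < b" by (simp add: dist_real_def abs_less_iff)
      moreover have "v0 \<le> x" using x(1) J by auto
      ultimately show "\<gamma> x = \<Gamma> x" using \<Gamma>eq[OF g] by simp
    qed
    then show ?thesis using \<Gamma>eq[OF g vv0 vb] by simp
  qed
  show ?thesis
  proof (cases "\<forall>B. \<exists>b\<in>S. B < b")
    case True
    have "isol G \<Gamma> {v0..}" unfolding isol_def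
    proof
      fix v assume v: "v \<in> {v0..}"
      obtain b where b: "b \<in> S" "v < b" using True by blast
      have Jb: "{v0..} \<inter> {..<b} = {v0..<b}" by auto
      show "(\<Gamma> has_real_derivative G v (\<Gamma> v)) (at v within {v0..})"
        by (rule \<Gamma>deriv[OF v subset_refl b Jb])
    qed
    then show ?thesis using \<Gamma>v0 by blast
  next
    case False
    then obtain B0 where B0: "\<forall>b\<in>S. b \<le> B0" by (auto simp: not_less)
    have bdd: "bdd_above S" using B0 by (auto simp: bdd_above_def)
    have Sne: "S \<noteq> {}" using S0 by blast
    define B where "B = Sup S"
    have upper: "b \<le> B" if "b \<in> S" for b unfolding B_def by (rule cSup_upper[OF that bdd])
    have lessB: "\<exists>b\<in>S. y < b" if "y < B" for y using that less_cSup_iff[OF Sne bdd] unfolding B_def by blast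
    have v0B: "v0 < B" using upper[OF S0] d0(1) by simp
    have sol: "isol G \<Gamma> {v0..<B}" unfolding isol_def
    proof
      fix v assume v: "v \<in> {v0..<B}"
      obtain b where b: "b \<in> S" "v < b" using lessB[of v] v by auto
      have Jb: "{v0..<B} \<inter> {..<b} = {v0..<b}" using upper[OF b(1)] by auto
      show "(\<Gamma> has_real_derivative G v (\<Gamma> v)) (at v within {v0..<B})"
        by (rule \<Gamma>deriv[OF v _ b Jb]) auto
    qed
    have unb: "\<forall>Z. \<exists>t\<in>{v0..<B}. Z < \<Gamma> t"
    proof (rule ccontr)
      assume "\<not> (\<forall>Z. \<exists>t\<in>{v0..<B}. Z < \<Gamma> t)"
      then obtain Z where Z: "\<forall>t\<in>{v0..<B}. \<Gamma> t \<le> Z" by (auto simp: not_less)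
      define Y where "Y = max \<bar>Z\<bar> \<bar>x0\<bar>"
      obtain \<delta> where d: "\<delta> > 0" "\<forall>a\<in>{v0..B}. \<forall>y0\<in>{-Y..Y}. \<exists>\<phi>. \<phi> a = y0 \<and> isol G \<phi> {a..a+\<delta>}"
        using local_exist[OF Gc Gl, of v0 B Y] by blast
      obtain b where b: "b \<in> S" "B - \<delta>/2 < b" using lessB[of "B - \<delta>/2"] d(1) by auto
      have bB: "b \<le> B" using upper[OF b(1)] .
      obtain \<gamma> where g: "\<gamma> v0 = x0" "isol G \<gamma> {v0..b}" and v0b: "v0 < b" using b(1) unfolding S_def by blast
      define t where "t = max v0 (b - \<delta>/2)"
      have t: "v0 \<le> t" "t < b" "t \<le> B" "B < t + \<delta>" using v0b d(1) bB b(2) by (auto simp: t_def)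
      have gt: "\<gamma> t = \<Gamma> t" using \<Gamma>eq[OF g t(1) t(2)] by simp
      have "t \<in> {v0..<B}" using t bB by simp
      then have "\<Gamma> t \<le> Z" using Z by blast
      moreover have "x0 \<le> \<gamma> t" using solmono[OF g(2), of t] t g(1) by simp
      ultimately have gY: "\<gamma> t \<in> {-Y..Y}" using gt by (auto simp: Y_def)
      have tin: "t \<in> {v0..B}" using t by simp
      obtain \<phi> where ph: "\<phi> t = \<gamma> t" "isol G \<phi> {t..t+\<delta>}" using d(2) tin gY by blast
      have gs: "isol G \<gamma> {v0..t}" by (rule isol_subset[OF g(2)]) (use t in simp)
      define \<psi> where "\<psi> = (\<lambda>v. if v \<le> t then \<gamma> v else \<phi> v)"
      have i\<psi>: "isol G \<psi> {v0..t+\<delta>}" unfolding \<psi>_def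
        by (rule isol_glue[OF gs ph(2) ph(1) t(1) d(1)])
      have "\<psi> v0 = x0" using t(1) g(1) by (simp add: \<psi>_def)
      then have ex: "\<exists>\<gamma>'. \<gamma>' v0 = x0 \<and> isol G \<gamma>' {v0..t+\<delta>}" using i\<psi> by blast
      have "v0 < t + \<delta>" using t(1) d(1) by simp
      then have "t + \<delta> \<in> S" unfolding S_def mem_Collect_eq using ex by blast
      then have "t + \<delta> \<le> B" by (rule upper)
      then show False using t(4) by simp
    qed
    show ?thesis using v0B sol unb \<Gamma>v0 by blast
  qed
qed



lemma hlow:
  fixes h :: "real \<Rightarrow> real \<Rightarrow> real" and hinf :: "real \<Rightarrow> real" and hx
  assumes h_deriv: "\<forall>v x. x > - rc \<longrightarrow> (h v has_real_derivative hx v x) (at x)"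
    and h_lim: "\<forall>K. compact K \<and> K \<subseteq> {- rc<..} \<longrightarrow> uniform_limit K h hinf at_top"
    and hinf_pos: "\<forall>x. x > - rc \<longrightarrow> hinf x > 0"
    and cd: "- rc < c" "c \<le> d"
  shows "\<exists>V m. m > 0 \<and> (\<forall>v\<ge>V. \<forall>x\<in>{c..d}. m \<le> h v x)"
proof -
  have Ksub: "{c..d} \<subseteq> {- rc<..}" using cd by auto
  have ul: "uniform_limit {c..d} h hinf at_top" using h_lim Ksub compact_Icc by blast
  have hc: "continuous_on {c..d} (h v)" for v
  proof (rule continuous_at_imp_continuous_on, rule ballI)
    fix x assume "x \<in> {c..d}"
    then have "x > - rc" using cd by simp
    then have "(h v has_real_derivative hx v x) (at x)" using h_deriv by blast
    then show "isCont (h v) x" by (rule DERIV_isCont)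
  qed
  have "continuous_on {c..d} hinf"
    by (rule uniform_limit_theorem[OF _ ul]) (auto simp: hc)
  then obtain x1 where x1: "x1 \<in> {c..d}" "\<forall>y\<in>{c..d}. hinf x1 \<le> hinf y"
    using continuous_attains_inf[of "{c..d}" hinf] cd by auto
  define m0 where "m0 = hinf x1"
  have m0: "m0 > 0" unfolding m0_def using hinf_pos x1(1) cd by auto
  have m02: "m0/2 > 0" using m0 by simp
  have "\<forall>\<^sub>F v in at_top. \<forall>x\<in>{c..d}. dist (h v x) (hinf x) < m0/2"
    using uniform_limitD[OF ul m02] .
  then obtain V where V: "\<forall>v\<ge>V. \<forall>x\<in>{c..d}. dist (h v x) (hinf x) < m0/2"
    unfolding eventually_at_top_linorder by blast
  show ?thesis
  proof (intro exI conjI allI impI ballI)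
    show "m0/2 > 0" using m0 by simp
    fix v x assume v: "V \<le> v" and x: "x \<in> {c..d}"
    have "dist (h v x) (hinf x) < m0/2" using V v x by blast
    moreover have "m0 \<le> hinf x" using x1(2) x unfolding m0_def by blast
    ultimately have "- (m0/2) < h v x - hinf x" "m0 \<le> hinf x" unfolding dist_real_def abs_less_iff by auto
    then show "m0/2 \<le> h v x" by linarith
  qed
qed

lemma lipN:
  fixes h hx :: "real \<Rightarrow> real \<Rightarrow> real" and xp :: "real \<Rightarrow> real" and rc :: real
  assumes h_cont: "continuous_on (spacetime_domain rc) (\<lambda>p. h (fst p) (snd p))"
    and h_deriv: "\<forall>v x. x > - rc \<longrightarrow> (h v has_real_derivative hx v x) (at x)"
    and hx_cont: "continuous_on (spacetime_domain rc) (\<lambda>p. hx (fst p) (snd p))"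
    and xpc: "continuous_on UNIV xp"
  shows "\<forall>a b c d. - rc < c \<longrightarrow> (\<exists>K\<ge>0. \<forall>v\<in>{a..b}. \<forall>x\<in>{c..d}. \<forall>y\<in>{c..d}.
      \<bar>1/2 * h v x * (x - xp v) * x - 1/2 * h v y * (y - xp v) * y\<bar> \<le> K * \<bar>x - y\<bar>)"
proof (intro allI impI)
  fix a b c d :: real assume c: "- rc < c"
  define N where "N v x = 1/2 * h v x * (x - xp v) * x" for v x
  define N' where "N' v x = 1/2 * (hx v x * (x - xp v) * x + h v x * (2 * x - xp v))" for v x
  have sub: "{a..b} \<times> {c..d} \<subseteq> spacetime_domain rc" using c by (auto simp: spacetime_domain_def)
  have xpf: "continuous_on ({a..b} \<times> {c..d}) (\<lambda>p. xp (fst p))"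
    by (rule continuous_on_compose2[OF xpc continuous_on_fst]) auto
  have "continuous_on ({a..b} \<times> {c..d}) (\<lambda>p. N' (fst p) (snd p))"
    unfolding N'_def
    by (intro continuous_intros continuous_on_subset[OF hx_cont sub] continuous_on_subset[OF h_cont sub] xpf)
  moreover have "compact ({a..b} \<times> {c..d})" by (intro compact_Times compact_Icc)
  ultimately obtain M where M: "M > 0" "\<forall>p\<in>{a..b} \<times> {c..d}. \<bar>N' (fst p) (snd p)\<bar> \<le> M"
    using cont_bound_box by blast
  have der: "((N v) has_real_derivative N' v x) (at x)" if "x > - rc" for v x
  proof -
    have hd: "(h v has_real_derivative hx v x) (at x)" using h_deriv that by blast
    have g: "((\<lambda>x. (x - xp v) * x) has_real_derivative (2*x - xp v)) (at x)"
      by (rule DERIV_cong[OF DERIV_mult[OF DERIV_diff[OF DERIV_ident DERIV_const] DERIV_ident]]) (simp add: algebra_simps)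
    have "((\<lambda>x. 1/2 * (h v x * ((x - xp v) * x))) has_real_derivative 1/2 * (hx v x * ((x - xp v) * x) + (2*x - xp v) * h v x)) (at x)"
      by (rule DERIV_cmult[OF DERIV_mult[OF hd g]])
    moreover have "(\<lambda>x. 1/2 * (h v x * ((x - xp v) * x))) = N v" by (rule ext) (simp add: N_def algebra_simps)
    moreover have "1/2 * (hx v x * ((x - xp v) * x) + (2*x - xp v) * h v x) = N' v x" by (simp add: N'_def algebra_simps)
    ultimately show ?thesis by simp
  qed
  have lt: "\<bar>N v y - N v x\<bar> \<le> M * \<bar>y - x\<bar>" if v: "v \<in> {a..b}" and xy: "x \<in> {c..d}" "y \<in> {c..d}" "x < y" for v x y
  proof -
    have "\<forall>z. x \<le> z \<and> z \<le> y \<longrightarrow> (N v has_real_derivative N' v z) (at z)"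
    proof (intro allI impI)
      fix z assume "x \<le> z \<and> z \<le> y"
      then have "z > - rc" using xy c by auto
      then show "(N v has_real_derivative N' v z) (at z)" by (rule der)
    qed
    then obtain z where z: "x < z" "z < y" "N v y - N v x = (y - x) * N' v z"
      using MVT2[OF xy(3), of "N v" "N' v"] by blast
    have "(v, z) \<in> {a..b} \<times> {c..d}" using v xy z by auto
    then have "\<bar>N' v z\<bar> \<le> M" using M(2) by fastforce
    then have ineq: "\<bar>y - x\<bar> * \<bar>N' v z\<bar> \<le> \<bar>y - x\<bar> * M" by (intro mult_left_mono) auto
    have "\<bar>N v y - N v x\<bar> = \<bar>y - x\<bar> * \<bar>N' v z\<bar>" by (simp only: z(3) abs_mult)
    also have "\<dots> \<le> \<bar>y - x\<bar> * M" by (rule ineq)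
    also have "\<dots> = M * \<bar>y - x\<bar>" by simp
    finally show ?thesis .
  qed
  show "\<exists>K\<ge>0. \<forall>v\<in>{a..b}. \<forall>x\<in>{c..d}. \<forall>y\<in>{c..d}.
      \<bar>1/2 * h v x * (x - xp v) * x - 1/2 * h v y * (y - xp v) * y\<bar> \<le> K * \<bar>x - y\<bar>"
  proof (intro exI[of _ M] conjI ballI)
    show "0 \<le> M" using M by simp
    fix v x y assume v: "v \<in> {a..b}" and x: "x \<in> {c..d}" and y: "y \<in> {c..d}"
    have "\<bar>N v x - N v y\<bar> \<le> M * \<bar>x - y\<bar>"
    proof (cases x y rule: linorder_cases)
      case less
      then show ?thesis using lt[OF v x y less] by (simp add: abs_minus_commute)
    next
      case equal
      then show ?thesis by simp
    next
      case greater
      then show ?thesis using lt[OF v y x greater] by simp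
    qed
    then show "\<bar>1/2 * h v x * (x - xp v) * x - 1/2 * h v y * (y - xp v) * y\<bar> \<le> M * \<bar>x - y\<bar>"
      unfolding N_def .
  qed
qed



theorem lemma3:
  fixes rc :: real and h hx :: "real \<Rightarrow> real \<Rightarrow> real" and hinf xp xp' xm :: "real \<Rightarrow> real"
  assumes rc_pos: "rc > 0"
    and h_pos: "\<forall>v x. x > - rc \<longrightarrow> h v x > 0"
    and h_cont: "continuous_on (spacetime_domain rc) (\<lambda>p. h (fst p) (snd p))"
    and h_deriv: "\<forall>v x. x > - rc \<longrightarrow> (h v has_real_derivative hx v x) (at x)"
    and hx_cont: "continuous_on (spacetime_domain rc) (\<lambda>p. hx (fst p) (snd p))"
    and h_lim: "\<forall>K. compact K \<and> K \<subseteq> {- rc<..} \<longrightarrow> uniform_limit K h hinf at_top"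
    and hinf_pos: "\<forall>x. x > - rc \<longrightarrow> hinf x > 0"
    and xp_deriv: "\<forall>v. (xp has_real_derivative xp' v) (at v)"
    and xp_decr: "\<forall>v. xp' v < 0"
    and xm_case1: "\<forall>v. (xm has_real_derivative 0) (at v)"
    and ah_order: "\<forall>v. xm v < xp v"
    and xp_lim: "(xp \<longlongrightarrow> 0) at_top"
    and xm_lim: "(xm \<longlongrightarrow> 0) at_top"
  shows "outgoing_null_geodesic rc h xp xm (\<lambda>v. 0) UNIV
       \<and> (\<forall>\<gamma> I. outgoing_null_geodesic rc h xp xm \<gamma> I \<and> (\<exists>v\<in>I. \<gamma> v = 0)
               \<longrightarrow> (\<forall>v\<in>I. \<gamma> v = 0))
       \<and> (\<forall>\<gamma> v0. outgoing_null_geodesic rc h xp xm \<gamma> {v0..} \<and> \<gamma> v0 < 0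
               \<longrightarrow> (\<gamma> \<longlongrightarrow> 0) at_top)
       \<and> event_horizon rc h xp xm \<noteq> {}"
proof -
  have xmc: "xm = (\<lambda>_. xm 0)"
  proof
    fix v show "xm v = xm 0" by (rule DERIV_isconst_all[OF xm_case1])
  qed
  have "(xm \<longlongrightarrow> xm 0) at_top" by (subst xmc) (rule tendsto_const)
  then have xm00: "xm 0 = 0" using tendsto_unique[OF _ _ xm_lim] by simp
  have xm0: "xm v = 0" for v using xmc xm00 by metis
  define N where "N v x = 1/2 * h v x * (x - xp v) * x" for v x
  have ng: "ngfield h xp xm = N" by (intro ext) (simp add: ngfield_def N_def xm0)
  have xpc: "continuous_on UNIV xp"
  proof (rule continuous_at_imp_continuous_on, rule ballI)
    fix v show "isCont xp v" using DERIV_isCont xp_deriv by blast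
  qed
  have xp_pos: "xp v > 0" for v using ah_order xm0 by metis
  have xp_anti: "xp w \<le> xp v" if vw: "v \<le> w" for v w
  proof (rule DERIV_nonpos_imp_nonincreasing[OF vw])
    fix x assume "v \<le> x" "x \<le> w"
    have "(xp has_real_derivative xp' x) (at x)" using xp_deriv by blast
    moreover have "xp' x \<le> 0" using xp_decr less_imp_le by blast
    ultimately show "\<exists>y. (xp has_real_derivative y) (at x) \<and> y \<le> 0" by blast
  qed
  have lipN': "\<forall>a b c d. - rc < c \<longrightarrow> (\<exists>K\<ge>0. \<forall>v\<in>{a..b}. \<forall>x\<in>{c..d}. \<forall>y\<in>{c..d}. \<bar>N v x - N v y\<bar> \<le> K * \<bar>x - y\<bar>)"
    using lipN[OF h_cont h_deriv hx_cont xpc] unfolding N_def .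
  have N0: "N v 0 = 0" for v by (simp add: N_def)
  have hl: "\<exists>V m. m > 0 \<and> (\<forall>v\<ge>V. \<forall>x\<in>{c..d}. m \<le> h v x)" if "- rc < c" "c \<le> d" for c d
    by (rule hlow[OF h_deriv h_lim hinf_pos that])
  have geo: "outgoing_null_geodesic rc h xp xm \<gamma> I \<longleftrightarrow> is_interval I \<and> I \<noteq> {} \<and>
      (\<forall>v\<in>I. - rc < \<gamma> v) \<and> isol N \<gamma> I" for \<gamma> I
    unfolding outgoing_null_geodesic_def isol_def ng by blast
  have P1: "outgoing_null_geodesic rc h xp xm (\<lambda>v. 0) UNIV"
    unfolding geo isol_def N0 using rc_pos by (auto intro: DERIV_const)
  have P2: "\<forall>v\<in>I. \<gamma> v = 0" if H: "outgoing_null_geodesic rc h xp xm \<gamma> I" "\<exists>v\<in>I. \<gamma> v = 0" for \<gamma> I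
  proof
    fix v assume v: "v \<in> I"
    have I: "is_interval I" and gp: "\<forall>u\<in>I. - rc < \<gamma> u" and gs: "isol N \<gamma> I" using H(1) unfolding geo by blast+
    obtain p where p: "p \<in> I" "\<gamma> p = 0" using H(2) by blast
    have zs: "\<forall>u\<in>I. ((\<lambda>_. 0) has_real_derivative N u ((\<lambda>_. 0::real) u)) (at u within I)"
      unfolding N0 by (auto intro: DERIV_const)
    have zp: "\<forall>u\<in>I. - rc < (\<lambda>_. 0::real) u" using rc_pos by simp
    have "\<gamma> v = (\<lambda>_. 0::real) v"
      by (rule ode_unique[OF lipN' I gs[unfolded isol_def] zs gp zp p(1) _ v]) (simp add: p(2))
    then show "\<gamma> v = 0" by simp
  qed
  have P3: "(\<gamma> \<longlongrightarrow> 0) at_top" if H: "outgoing_null_geodesic rc h xp xm \<gamma> {v0..}" "\<gamma> v0 < 0" for \<gamma> v0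
  proof -
    have gp: "\<forall>u\<in>{v0..}. - rc < \<gamma> u" and gs: "isol N \<gamma> {v0..}" using H(1) unfolding geo by blast+
    have gd: "\<forall>u\<in>{v0..}. (\<gamma> has_real_derivative N u (\<gamma> u)) (at u within {v0..})" using gs unfolding isol_def .
    have gc: "continuous_on {v0..} \<gamma>" by (rule deriv_cont_on[OF gd])
    have neg: "\<gamma> u < 0" if u: "v0 \<le> u" for u
    proof (rule ccontr)
      assume "\<not> \<gamma> u < 0"
      then have "0 \<le> \<gamma> u" by simp
      moreover have "continuous_on {v0..u} \<gamma>" by (rule continuous_on_subset[OF gc]) auto
      ultimately obtain z where z: "v0 \<le> z" "z \<le> u" "\<gamma> z = 0" using IVT'[of \<gamma> v0 0 u] H(2) u by auto
      have "\<forall>v\<in>{v0..}. \<gamma> v = 0" by (rule P2[OF H(1)]) (use z in auto)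
      then show False using H(2) by simp
    qed
    have Npos: "0 \<le> N u (\<gamma> u)" if u: "u \<in> {v0..}" for u
    proof -
      have a: "\<gamma> u < 0" using neg u by simp
      have b: "\<gamma> u - xp u < 0" using a xp_pos[of u] by simp
      have hp: "h u (\<gamma> u) > 0" using h_pos gp u by blast
      have "0 < h u (\<gamma> u) * ((\<gamma> u - xp u) * \<gamma> u)" by (rule mult_pos_pos[OF hp mult_neg_neg[OF b a]])
      then show ?thesis by (simp add: N_def algebra_simps)
    qed
    have mono: "\<gamma> s \<le> \<gamma> t" if "v0 \<le> s" "s \<le> t" for s t
      by (rule isol_mono[OF gs is_interval_ci]) (use that Npos in auto)
    have near: "\<exists>t\<ge>v0. - e < \<gamma> t" if e: "e > 0" for e
    proof (rule ccontr)
      assume "\<not> (\<exists>t\<ge>v0. - e < \<gamma> t)"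
      then have le: "\<gamma> t \<le> - e" if "v0 \<le> t" for t using that by (simp add: not_less)
      have c1: "- rc < \<gamma> v0" using gp by simp
      have c2: "\<gamma> v0 \<le> - e" using le by simp
      obtain V m where Vm: "m > 0" "\<forall>v\<ge>V. \<forall>x\<in>{\<gamma> v0..-e}. m \<le> h v x" using hl[OF c1 c2] by blast
      define V' where "V' = max V v0"
      define c0 where "c0 = m * (e * e) / 2"
      have c0: "c0 > 0" using Vm(1) e by (simp add: c0_def)
      have lb: "c0 \<le> N u (\<gamma> u)" if u: "u \<in> {V'..}" for u
      proof -
        have uv: "v0 \<le> u" "V \<le> u" using u by (auto simp: V'_def)
        have inr: "\<gamma> u \<in> {\<gamma> v0..-e}" using mono[OF order_refl uv(1)] le[OF uv(1)] by simp
        have hm: "m \<le> h u (\<gamma> u)" using Vm(2) uv(2) inr by blast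
        have p1: "e \<le> xp u - \<gamma> u" using le[OF uv(1)] xp_pos[of u] by simp
        have p2: "e \<le> - \<gamma> u" using le[OF uv(1)] by simp
        have "e * e \<le> (xp u - \<gamma> u) * (- \<gamma> u)" by (rule mult_mono[OF p1 p2]) (use e p1 in auto)
        then have "m * (e * e) \<le> h u (\<gamma> u) * ((xp u - \<gamma> u) * (- \<gamma> u))"
          by (rule mult_mono[OF hm]) (use Vm(1) e hm in auto)
        then show ?thesis by (simp add: c0_def N_def algebra_simps)
      qed
      have gd': "\<forall>u\<in>{V'..}. (\<gamma> has_real_derivative N u (\<gamma> u)) (at u within {V'..})"
      proof
        fix u assume "u \<in> {V'..}"
        then have "u \<in> {v0..}" by (simp add: V'_def)
        then have "(\<gamma> has_real_derivative N u (\<gamma> u)) (at u within {v0..})" using gd by blast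
        then show "(\<gamma> has_real_derivative N u (\<gamma> u)) (at u within {V'..})"
          by (rule DERIV_subset) (auto simp: V'_def)
      qed
      have gV: "\<gamma> V' < 0" using neg by (simp add: V'_def)
      define q where "q = V' + (1 - \<gamma> V') / c0"
      have qV: "V' \<le> q" using gV c0 by (simp add: q_def)
      have "c0 * (q - V') \<le> \<gamma> q - \<gamma> V'"
        by (rule deriv_lower_bound[OF is_interval_ci gd' _ _ _ qV]) (use lb qV in auto)
      moreover have "c0 * (q - V') = 1 - \<gamma> V'" using c0 by (simp add: q_def)
      ultimately have "1 \<le> \<gamma> q" by simp
      moreover have "\<gamma> q < 0" using neg qV by (simp add: V'_def)
      ultimately show False by simp
    qed
    show ?thesis unfolding tendsto_iff
    proof (intro allI impI)
      fix e :: real assume e: "e > 0"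
      obtain t where t: "v0 \<le> t" "- e < \<gamma> t" using near[OF e] by blast
      show "\<forall>\<^sub>F x in at_top. dist (\<gamma> x) 0 < e" unfolding eventually_at_top_linorder
      proof (intro exI allI impI)
        fix n assume n: "t \<le> n"
        have "\<gamma> t \<le> \<gamma> n" by (rule mono[OF t(1) n])
        moreover have "\<gamma> n < 0" using neg t(1) n by simp
        ultimately show "dist (\<gamma> n) 0 < e" using t(2) by (simp add: dist_real_def)
      qed
    qed
  qed
  define x0 where "x0 = xp 0 + 1"
  have x0pos: "x0 > 0" using xp_pos[of 0] by (simp add: x0_def)
  define Gh where "Gh v x = N v (max x x0)" for v x
  have GC: "continuous_on UNIV (\<lambda>p. Gh (fst p) (snd p))"
  proof -
    have xpf: "continuous_on (spacetime_domain rc) (\<lambda>p. xp (fst p))"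
      by (rule continuous_on_compose2[OF xpc continuous_on_fst]) auto
    have N0c: "continuous_on (spacetime_domain rc) (\<lambda>q. 1/2 * h (fst q) (snd q) * (snd q - xp (fst q)) * snd q)"
      by (intro continuous_intros h_cont xpf)
    have gm: "continuous_on UNIV (\<lambda>p::real\<times>real. (fst p, max (snd p) x0))" by (intro continuous_intros)
    have im: "(\<lambda>p::real\<times>real. (fst p, max (snd p) x0)) ` UNIV \<subseteq> spacetime_domain rc"
      using x0pos rc_pos by (auto simp: spacetime_domain_def)
    from continuous_on_compose2[OF N0c gm im] show ?thesis by (simp add: Gh_def N_def)
  qed
  have GL: "\<forall>a b c d. \<exists>K\<ge>0. \<forall>v\<in>{a..b}. \<forall>x\<in>{c..d}. \<forall>y\<in>{c..d}. \<bar>Gh v x - Gh v y\<bar> \<le> K * \<bar>x - y\<bar>"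
  proof (intro allI)
    fix a b c d :: real
    have cc: "- rc < max c x0" using x0pos rc_pos by simp
    obtain K where K: "K \<ge> 0" "\<forall>v\<in>{a..b}. \<forall>x\<in>{max c x0..max d x0}. \<forall>y\<in>{max c x0..max d x0}. \<bar>N v x - N v y\<bar> \<le> K * \<bar>x - y\<bar>"
      using lipN'[THEN spec[of _ a], THEN spec[of _ b], THEN spec[of _ "max c x0"], THEN spec[of _ "max d x0"], THEN mp, OF cc] by blast
    show "\<exists>K\<ge>0. \<forall>v\<in>{a..b}. \<forall>x\<in>{c..d}. \<forall>y\<in>{c..d}. \<bar>Gh v x - Gh v y\<bar> \<le> K * \<bar>x - y\<bar>"
    proof (intro exI[of _ K] conjI ballI)
      show "0 \<le> K" by (rule K(1))
      fix v x y assume v: "v \<in> {a..b}" and x: "x \<in> {c..d}" and y: "y \<in> {c..d}"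
      have mx: "max x x0 \<in> {max c x0..max d x0}" using x by auto
      have my: "max y x0 \<in> {max c x0..max d x0}" using y by auto
      have "\<bar>N v (max x x0) - N v (max y x0)\<bar> \<le> K * \<bar>max x x0 - max y x0\<bar>" using K(2) v mx my by blast
      also have "\<dots> \<le> K * \<bar>x - y\<bar>" using K(1) by (intro mult_left_mono) (auto simp: max_def)
      finally show "\<bar>Gh v x - Gh v y\<bar> \<le> K * \<bar>x - y\<bar>" by (simp add: Gh_def)
    qed
  qed
  have GP: "\<forall>v x. 0 \<le> v \<longrightarrow> Gh v x > 0"
  proof (intro allI impI)
    fix v x :: real assume v: "0 \<le> v"
    define m where "m = max x x0"
    have m0: "m > 0" using x0pos by (simp add: m_def)
    have m1: "m - xp v > 0" using xp_anti[OF v] by (simp add: m_def x0_def)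
    have hp: "h v m > 0" using h_pos m0 rc_pos by simp
    have "0 < h v m * ((m - xp v) * m)" by (intro mult_pos_pos hp m1 m0)
    then show "Gh v x > 0" by (simp add: Gh_def N_def m_def[symmetric] algebra_simps)
  qed
  have Gid: "Gh v y = N v y" if "x0 \<le> y" for v y using that by (simp add: Gh_def)
  have Gnn: "\<forall>u\<in>J. 0 \<le> Gh u (\<Gamma> u)" if "J \<subseteq> {0..}" for J \<Gamma>
  proof
    fix u assume "u \<in> J"
    then have "0 \<le> u" using that by auto
    then show "0 \<le> Gh u (\<Gamma> u)" using GP less_imp_le by blast
  qed
  have reach: "reaches_scri rc h xp xm 0 x0"
  proof -
    have ms: "(\<exists>\<gamma>. \<gamma> 0 = x0 \<and> isol Gh \<gamma> {0..}) \<or>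
         (\<exists>b>0. \<exists>\<gamma>. \<gamma> 0 = x0 \<and> isol Gh \<gamma> {0..<b} \<and> (\<forall>Z. \<exists>t\<in>{0..<b}. Z < \<gamma> t))"
      by (rule max_sol[OF GC GL GP])
    have conv: "outgoing_null_geodesic rc h xp xm \<Gamma> J \<and> (\<forall>s t. s \<in> J \<longrightarrow> t \<in> J \<longrightarrow> s \<le> t \<longrightarrow> \<Gamma> s \<le> \<Gamma> t)"
      if J: "is_interval J" "0 \<in> J" "J \<subseteq> {0..}" and s: "isol Gh \<Gamma> J" and g0: "\<Gamma> 0 = x0" for \<Gamma> J
    proof
      have mono: "\<Gamma> s \<le> \<Gamma> t" if "s \<in> J" "t \<in> J" "s \<le> t" for s t
        by (rule isol_mono[OF s J(1) Gnn[OF J(3)] that])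
      have ge: "x0 \<le> \<Gamma> u" if "u \<in> J" for u
      proof -
        have "0 \<le> u" using that J(3) by auto
        then show ?thesis using mono[OF J(2) that] g0 by simp
      qed
      show "\<forall>s t. s \<in> J \<longrightarrow> t \<in> J \<longrightarrow> s \<le> t \<longrightarrow> \<Gamma> s \<le> \<Gamma> t" using mono by blast
      have "isol N \<Gamma> J" unfolding isol_def
      proof
        fix u assume u: "u \<in> J"
        have "(\<Gamma> has_real_derivative Gh u (\<Gamma> u)) (at u within J)" using s u unfolding isol_def by blast
        then show "(\<Gamma> has_real_derivative N u (\<Gamma> u)) (at u within J)" using Gid[OF ge[OF u]] by simp
      qed
      moreover have "\<forall>u\<in>J. - rc < \<Gamma> u"
      proof
        fix u assume "u \<in> J"
        then have "x0 \<le> \<Gamma> u" by (rule ge)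
        then show "- rc < \<Gamma> u" using x0pos rc_pos by simp
      qed
      moreover have "J \<noteq> {}" using J(2) by blast
      ultimately show "outgoing_null_geodesic rc h xp xm \<Gamma> J" unfolding geo using J(1) by blast
    qed
    show ?thesis
    proof (cases "\<exists>\<gamma>. \<gamma> 0 = x0 \<and> isol Gh \<gamma> {0..}")
      case True
      then obtain \<Gamma> where g: "\<Gamma> 0 = x0" "isol Gh \<Gamma> {0..}" by blast
      have J: "is_interval {0::real..}" "0 \<in> {0::real..}" "{0::real..} \<subseteq> {0..}" by auto
      obtain geod: "outgoing_null_geodesic rc h xp xm \<Gamma> {0..}"
        and mono: "\<forall>s t. s \<in> {0..} \<longrightarrow> t \<in> {0..} \<longrightarrow> s \<le> t \<longrightarrow> \<Gamma> s \<le> \<Gamma> t"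
        using conv[OF J g(2) g(1)] by blast
      have unb: "\<exists>t\<ge>0. Z < \<Gamma> t" for Z
      proof (rule ccontr)
        assume "\<not> (\<exists>t\<ge>0. Z < \<Gamma> t)"
        then have le: "\<Gamma> t \<le> Z" if "0 \<le> t" for t using that by (simp add: not_less)
        have gx: "x0 \<le> \<Gamma> t" if "0 \<le> t" for t using mono that g(1) by auto
        have c1: "- rc < x0" using x0pos rc_pos by simp
        have c2: "x0 \<le> Z" using le[of 0] g(1) by simp
        obtain V m where Vm: "m > 0" "\<forall>v\<ge>V. \<forall>x\<in>{x0..Z}. m \<le> h v x" using hl[OF c1 c2] by blast
        define V' where "V' = max V 0"
        define c0 where "c0 = m * x0 / 2"
        have c0: "c0 > 0" using Vm(1) x0pos by (simp add: c0_def)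
        have lb: "c0 \<le> Gh u (\<Gamma> u)" if u: "u \<in> {V'..}" for u
        proof -
          have uv: "0 \<le> u" "V \<le> u" using u by (auto simp: V'_def)
          have inr: "\<Gamma> u \<in> {x0..Z}" using gx[OF uv(1)] le[OF uv(1)] by simp
          have hm: "m \<le> h u (\<Gamma> u)" using Vm(2) uv(2) inr by blast
          have p1: "1 \<le> \<Gamma> u - xp u" using gx[OF uv(1)] xp_anti[OF uv(1)] by (simp add: x0_def)
          have p2: "x0 \<le> \<Gamma> u" using gx[OF uv(1)] .
          have "1 * x0 \<le> (\<Gamma> u - xp u) * \<Gamma> u" by (rule mult_mono[OF p1 p2]) (use x0pos p1 in auto)
          then have ineq: "m * x0 \<le> h u (\<Gamma> u) * ((\<Gamma> u - xp u) * \<Gamma> u)"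
            by (intro mult_mono[OF hm]) (use Vm(1) x0pos hm in auto)
          have eqG: "Gh u (\<Gamma> u) = (h u (\<Gamma> u) * ((\<Gamma> u - xp u) * \<Gamma> u)) / 2"
            unfolding Gid[OF p2] N_def by (simp add: algebra_simps)
          show ?thesis unfolding eqG c0_def using ineq by simp
        qed
        have gd': "\<forall>u\<in>{V'..}. (\<Gamma> has_real_derivative Gh u (\<Gamma> u)) (at u within {V'..})"
        proof
          fix u assume "u \<in> {V'..}"
          then have "u \<in> {0..}" by (simp add: V'_def)
          then have "(\<Gamma> has_real_derivative Gh u (\<Gamma> u)) (at u within {0..})" using g(2) unfolding isol_def by blast
          then show "(\<Gamma> has_real_derivative Gh u (\<Gamma> u)) (at u within {V'..})"
            by (rule DERIV_subset) (auto simp: V'_def)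
        qed
        have gV: "\<Gamma> V' \<le> Z" using le by (simp add: V'_def)
        define q where "q = V' + (Z - \<Gamma> V' + 1) / c0"
        have qV: "V' \<le> q" using gV c0 by (simp add: q_def)
        have "c0 * (q - V') \<le> \<Gamma> q - \<Gamma> V'"
          by (rule deriv_lower_bound[OF is_interval_ci gd' _ _ _ qV]) (use lb qV in auto)
        moreover have "c0 * (q - V') = Z - \<Gamma> V' + 1" using c0 by (simp add: q_def)
        ultimately have "Z + 1 \<le> \<Gamma> q" by simp
        moreover have "\<Gamma> q \<le> Z" using le qV by (simp add: V'_def)
        ultimately show False by simp
      qed
      have "filterlim \<Gamma> at_top at_top" unfolding filterlim_at_top
      proof
        fix Z
        obtain t where t: "0 \<le> t" "Z < \<Gamma> t" using unb by blast
        show "\<forall>\<^sub>F x in at_top. Z \<le> \<Gamma> x" unfolding eventually_at_top_linorder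
        proof (intro exI allI impI)
          fix n assume "t \<le> n"
          then have "\<Gamma> t \<le> \<Gamma> n" using mono t(1) by auto
          then show "Z \<le> \<Gamma> n" using t(2) by simp
        qed
      qed
      then show ?thesis unfolding reaches_scri_def using geod g(1) by blast
    next
      case False
      then obtain b \<Gamma> where b: "b > 0" and g: "\<Gamma> 0 = x0" "isol Gh \<Gamma> {0..<b}" and unb: "\<forall>Z. \<exists>t\<in>{0..<b}. Z < \<Gamma> t"
        using ms by blast
      have J: "is_interval {0::real..<b}" "0 \<in> {0::real..<b}" "{0::real..<b} \<subseteq> {0..}" using b by auto
      obtain geod: "outgoing_null_geodesic rc h xp xm \<Gamma> {0..<b}"
        and mono: "\<forall>s t. s \<in> {0..<b} \<longrightarrow> t \<in> {0..<b} \<longrightarrow> s \<le> t \<longrightarrow> \<Gamma> s \<le> \<Gamma> t"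
        using conv[OF J g(2) g(1)] by blast
      have "filterlim \<Gamma> at_top (at_left b)" unfolding filterlim_at_top
      proof
        fix Z
        obtain t where t: "t \<in> {0..<b}" "Z < \<Gamma> t" using unb by blast
        have ev: "\<forall>\<^sub>F x in at_left b. x \<in> {t<..<b}" by (rule eventually_at_left_real) (use t in simp)
        show "\<forall>\<^sub>F x in at_left b. Z \<le> \<Gamma> x"
        proof (rule eventually_mono[OF ev])
          fix x assume x: "x \<in> {t<..<b}"
          then have "x \<in> {0..<b}" using t(1) by auto
          then have "\<Gamma> t \<le> \<Gamma> x" using mono t(1) x by auto
          then show "Z \<le> \<Gamma> x" using t(2) by simp
        qed
      qed
      then show ?thesis unfolding reaches_scri_def using geod g(1) b by blast
    qed
  qed
  have notreach: "\<not> reaches_scri rc h xp xm 0 0"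
  proof
    assume "reaches_scri rc h xp xm 0 0"
    then consider (A) \<gamma> where "outgoing_null_geodesic rc h xp xm \<gamma> {0..}" "\<gamma> 0 = 0" "filterlim \<gamma> at_top at_top"
      | (B) b \<gamma> where "b > 0" "outgoing_null_geodesic rc h xp xm \<gamma> {0..<b}" "\<gamma> 0 = 0" "filterlim \<gamma> at_top (at_left b)"
      unfolding reaches_scri_def by blast
    then show False
    proof cases
      case A
      have z: "\<forall>v\<in>{0..}. \<gamma> v = 0" by (rule P2[OF A(1)]) (use A(2) in auto)
      have e1: "\<forall>\<^sub>F x in at_top. 1 \<le> \<gamma> x" using A(3) unfolding filterlim_at_top by blast
      have e2: "\<forall>\<^sub>F x in at_top. (0::real) \<le> x" by (rule eventually_ge_at_top)
      have "\<forall>\<^sub>F (x::real) in at_top. False"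
        by (rule eventually_mono[OF eventually_conj[OF e1 e2]]) (use z in auto)
      then show False by simp
    next
      case B
      have z: "\<forall>v\<in>{0..<b}. \<gamma> v = 0" by (rule P2[OF B(2)]) (use B(1) B(3) in auto)
      have e1: "\<forall>\<^sub>F x in at_left b. 1 \<le> \<gamma> x" using B(4) unfolding filterlim_at_top by blast
      have e2: "\<forall>\<^sub>F x in at_left b. x \<in> {0<..<b}" by (rule eventually_at_left_real) (use B(1) in simp)
      have "\<forall>\<^sub>F x in at_left b. False"
        by (rule eventually_mono[OF eventually_conj[OF e1 e2]]) (use z in auto)
      then show False by (simp add: trivial_limit_at_left_real)
    qed
  qed
  define T where "T = trapped_region rc h xp xm"
  define D where "D = spacetime_domain rc"
  have in1: "(0, 0) \<in> D \<inter> T" using notreach rc_pos by (simp add: T_def D_def trapped_region_def spacetime_domain_def)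
  have in2: "(0, x0) \<in> D - T" using reach x0pos rc_pos by (simp add: T_def D_def trapped_region_def spacetime_domain_def)
  have "D = {p. - rc < (0::real, 1::real) \<bullet> p}" by (auto simp: D_def spacetime_domain_def inner_prod_def)
  then have "convex D" using convex_halfspace_gt by simp
  then have "connected D" by (rule convex_connected)
  then have "D \<inter> frontier T \<noteq> {}" by (rule connected_Int_frontier) (use in1 in2 in blast)+
  then have P4: "event_horizon rc h xp xm \<noteq> {}" by (simp add: event_horizon_def D_def T_def)
  show ?thesis using P1 P2 P3 P4 by blast
qed

end
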